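(* Every connected graph $G$ of order $n \ge 3$ is an induced subgraph of a locally Dirac graph.
   Context: A graph $H$ is locally Dirac if for every vertex $v \in V(H)$ and every $u \in N(v)$, $\deg_{\langle N(v)\rangle}(u) \ge \deg_H(v)/2$, where $N(v)$ is the open neighbourhood of $v$ and $\langle N(v)\rangle$ the subgraph induced by it (i.e. $\langle N(v)\rangle$ satisfies Dirac's minimum degree condition for every $v$). *)

theory Defs
  imports Main
begin

definition simple_graph :: "'a set \<Rightarrow> 'a set set \<Rightarrow> bool" where
  "simple_graph V E \<longleftrightarrow> finite V \<and> (\<forall>e\<in>E. e \<subseteq> V \<and> card e = 2)"

definition nbhd :: "'a set set \<Rightarrow> 'a \<Rightarrow> 'a set" where
  "nbhd E v = {u. {u, v} \<in> E}"

definition degree :: "'a set set \<Rightarrow> 'a \<Rightarrow> nat" where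
  "degree E v = card (nbhd E v)"

definition induced_degree :: "'a set set \<Rightarrow> 'a set \<Rightarrow> 'a \<Rightarrow> nat" where
  "induced_degree E S u = card (nbhd E u \<inter> S)"

definition locally_dirac :: "'a set \<Rightarrow> 'a set set \<Rightarrow> bool" where
  "locally_dirac V E \<longleftrightarrow>
     (\<forall>v\<in>V. \<forall>u\<in>nbhd E v. 2 * induced_degree E (nbhd E v) u \<ge> degree E v)"

inductive reachable :: "'a set set \<Rightarrow> 'a \<Rightarrow> 'a \<Rightarrow> bool" for E where
  refl: "reachable E x x"
| step: "reachable E x y \<Longrightarrow> {y, z} \<in> E \<Longrightarrow> reachable E x z"

definition connected_graph :: "'a set \<Rightarrow> 'a set set \<Rightarrow> bool" where
  "connected_graph V E \<longleftrightarrow> V \<noteq> {} \<and> (\<forall>x\<in>V. \<forall>y\<in>V. reachable E x y)"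

definition induced_embedding :: "('a \<Rightarrow> 'b) \<Rightarrow> 'a set \<Rightarrow> 'a set set \<Rightarrow> 'b set \<Rightarrow> 'b set set \<Rightarrow> bool" where
  "induced_embedding f V E W F \<longleftrightarrow> inj_on f V \<and> f ` V \<subseteq> W \<and>
     (\<forall>x\<in>V. \<forall>y\<in>V. {x, y} \<in> E \<longleftrightarrow> {f x, f y} \<in> F)"

end

theory Submission
  imports Defs
begin

definition jF :: "'a set set \<Rightarrow> 'a set \<Rightarrow> nat \<Rightarrow> ('a + nat) set set" where
  "jF E V k = {{Inl x, Inl y} | x y. {x,y} \<in> E} \<union> {{Inl x, Inr i} | x i. x \<in> V \<and> i < k}
     \<union> {{Inr i, Inr j} | i j. i < k \<and> j < k \<and> i \<noteq> j}"

lemma jF_LL: "{Inl x, Inl y} \<in> jF E V k \<longleftrightarrow> {x,y} \<in> E"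
  unfolding jF_def by (auto simp: doubleton_eq_iff insert_commute)

lemma jF_LR: "{Inl x, Inr i} \<in> jF E V k \<longleftrightarrow> x \<in> V \<and> i < k"
  unfolding jF_def by (auto simp: doubleton_eq_iff insert_commute)

lemma jF_RL: "{Inr i, Inl x} \<in> jF E V k \<longleftrightarrow> x \<in> V \<and> i < k"
  using jF_LR by (metis insert_commute)

lemma jF_RR: "{Inr i, Inr j} \<in> jF E V k \<longleftrightarrow> i < k \<and> j < k \<and> i \<noteq> j"
  unfolding jF_def by (auto simp: doubleton_eq_iff insert_commute)

lemma nb_L:
  assumes "a \<in> V"
  shows "nbhd (jF E V k) (Inl a) = Inl ` nbhd E a \<union> Inr ` {..<k}"
proof (rule set_eqI)
  fix p show "p \<in> nbhd (jF E V k) (Inl a) \<longleftrightarrow> p \<in> Inl ` nbhd E a \<union> Inr ` {..<k}"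
    by (cases p) (auto simp: nbhd_def jF_LL jF_RL assms)
qed

lemma nb_R:
  assumes "i < k"
  shows "nbhd (jF E V k) (Inr i) = Inl ` V \<union> Inr ` ({..<k} - {i})"
proof (rule set_eqI)
  fix p show "p \<in> nbhd (jF E V k) (Inr i) \<longleftrightarrow> p \<in> Inl ` V \<union> Inr ` ({..<k} - {i})"
    by (cases p) (auto simp: nbhd_def jF_LR jF_RR assms)
qed

theorem mainTheorem3:
  fixes V :: "'a set" and E :: "'a set set"
  assumes "simple_graph V E" and "connected_graph V E" and "card V \<ge> 3"
  shows "\<exists>(W :: ('a + nat) set) F f. simple_graph W F \<and> locally_dirac W F \<and>
           induced_embedding f V E W F"
proof -
  define n where "n = card V"
  define k where "k = n + 2"
  define W :: "('a + nat) set" where "W = Inl ` V \<union> Inr ` {..<k}"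
  define F where "F = jF E V k"
  have finV: "finite V" using assms(1) by (simp add: simple_graph_def)
  have Esub: "\<And>e. e \<in> E \<Longrightarrow> e \<subseteq> V \<and> card e = 2" using assms(1) by (simp add: simple_graph_def)
  have nbE: "nbhd E a \<subseteq> V - {a}" for a
  proof
    fix u assume "u \<in> nbhd E a"
    hence "{u,a} \<in> E" by (simp add: nbhd_def)
    with Esub[OF this] show "u \<in> V - {a}" by (cases "u = a") auto
  qed
  have finnb: "finite (nbhd E a)" for a using nbE finV by (meson finite_Diff finite_subset)
  have dle: "card (nbhd E a) \<le> n" for a
    unfolding n_def using nbE finV by (meson card_mono Diff_subset order_trans)
  have sg: "simple_graph W F"
    unfolding simple_graph_def
  proof (rule conjI[OF _ ballI])
    show "finite W" using finV by (simp add: W_def)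
  next
    fix e assume "e \<in> F"
    then consider (a) x y where "e = {Inl x, Inl y}" "{x,y} \<in> E"
      | (b) x i where "e = {Inl x, Inr i}" "x \<in> V" "i < k"
      | (c) i j where "e = {Inr i, Inr j}" "i < k" "j < k" "i \<noteq> j"
      unfolding F_def jF_def by blast
    then show "e \<subseteq> W \<and> card e = 2"
    proof cases
      case a
      with Esub[OF a(2)] have "x \<noteq> y" "x \<in> V" "y \<in> V" by (auto simp: card_insert_if split: if_splits)
      thus ?thesis using a by (auto simp: W_def)
    next
      case b thus ?thesis by (auto simp: W_def)
    next
      case c thus ?thesis by (auto simp: W_def)
    qed
  qed
  have ld: "locally_dirac W F"
    unfolding locally_dirac_def
  proof (intro ballI)
    fix v u assume v: "v \<in> W" and u: "u \<in> nbhd F v"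
    show "degree F v \<le> 2 * induced_degree F (nbhd F v) u"
    proof (cases v)
      case (Inl a)
      with v have a: "a \<in> V" by (auto simp: W_def)
      have N: "nbhd F v = Inl ` nbhd E a \<union> Inr ` {..<k}" using nb_L[OF a, of E k] Inl F_def by simp
      have deg: "degree F v = card (nbhd E a) + k"
        unfolding degree_def N
        by (subst card_Un_disjoint) (auto simp: finnb card_image)
      show ?thesis
      proof (cases u)
        case (Inl b)
        with u N have b: "b \<in> V" using nbE by auto
        have "Inr ` {..<k} \<subseteq> nbhd F u \<inter> nbhd F v"
          using nb_L[OF b, of E k] Inl N F_def by auto
        hence "card (Inr ` {..<k} :: ('a+nat) set) \<le> induced_degree F (nbhd F v) u"
          unfolding induced_degree_def
          by (intro card_mono) (auto simp: N finnb)
        hence "k \<le> induced_degree F (nbhd F v) u" by (simp add: card_image)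
        thus ?thesis using deg dle[of a] k_def by simp
      next
        case (Inr i)
        with u N have i: "i < k" by auto
        have "Inl ` nbhd E a \<union> Inr ` ({..<k} - {i}) \<subseteq> nbhd F u \<inter> nbhd F v"
          using nb_R[OF i, of E V] Inr N F_def nbE[of a] by auto
        hence "card (Inl ` nbhd E a \<union> Inr ` ({..<k} - {i})) \<le> induced_degree F (nbhd F v) u"
          unfolding induced_degree_def
          by (intro card_mono) (auto simp: N finnb)
        moreover have "card (Inl ` nbhd E a \<union> Inr ` ({..<k} - {i})) = card (nbhd E a) + (k - 1)"
          by (subst card_Un_disjoint) (auto simp: finnb card_image i)
        ultimately show ?thesis using deg k_def by simp
      qed
    next
      case (Inr i)
      with v have i: "i < k" by (auto simp: W_def)
      have N: "nbhd F v = Inl ` V \<union> Inr ` ({..<k} - {i})" using nb_R[OF i, of E V] Inr F_def by simp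
      have deg: "degree F v = n + (k - 1)"
        unfolding degree_def N n_def
        by (subst card_Un_disjoint) (auto simp: finV card_image i)
      show ?thesis
      proof (cases u)
        case (Inl b)
        with u N have b: "b \<in> V" by auto
        have "Inr ` ({..<k} - {i}) \<subseteq> nbhd F u \<inter> nbhd F v"
          using nb_L[OF b, of E k] Inl N F_def by auto
        hence "card (Inr ` ({..<k} - {i}) :: ('a+nat) set) \<le> induced_degree F (nbhd F v) u"
          unfolding induced_degree_def
          by (intro card_mono) (auto simp: N finV)
        hence "k - 1 \<le> induced_degree F (nbhd F v) u" by (simp add: card_image i)
        thus ?thesis using deg k_def by simp
      next
        case (Inr j)
        with u N have j: "j < k" "j \<noteq> i" by auto
        have "Inl ` V \<union> Inr ` ({..<k} - {i,j}) \<subseteq> nbhd F u \<inter> nbhd F v"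
          using nb_R[OF j(1), of E V] Inr N F_def by auto
        hence "card (Inl ` V \<union> Inr ` ({..<k} - {i,j})) \<le> induced_degree F (nbhd F v) u"
          unfolding induced_degree_def
          by (intro card_mono) (auto simp: N finV)
        moreover have "card (Inl ` V \<union> Inr ` ({..<k} - {i,j})) = n + (k - 2)"
          unfolding n_def
          using i j by (subst card_Un_disjoint) (auto simp: finV card_image card_Diff_subset)
        ultimately show ?thesis using deg k_def assms(3) n_def by simp
      qed
    qed
  qed
  have emb: "induced_embedding Inl V E W F"
    unfolding induced_embedding_def F_def W_def by (auto simp: jF_LL)
  show ?thesis using sg ld emb by blast
qed

end
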